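(* Let $\Upsilon_1=\{d(\chi_C): C\subseteq V,\ \kappa(C,V\setminus C)=1\}$ be the set of bond elements of $L$. Then $\Upsilon_1$ generates $L$, and the graph on $L$ in which $\lambda,\mu$ are adjacent iff $V^c_\lambda\cap V^c_\mu$ is a face of codimension one of both cells (the one-skeleton of the Delaunay dual of the Voronoi diagram) is isomorphic to the Cayley graph $\mathrm{Cay}(L,\Upsilon_1)$.
   Context: $G=(V,E)$ is a finite connected graph; each edge gives oriented edges $e,\bar e$. Real $1$-cochains are $x$ on oriented edges with $x_{\bar e}=-x_e$, $\langle x,y\rangle=\sum_{e\in E}x_ey_e$, $q(x)=\langle x,x\rangle$. For $f:V\to\mathbb R$, $d(f)(e)=f(\text{head}(e))-f(\text{tail}(e))$; $K=d(\mathbb R^V)$ and $L=d(\mathbb Z^V)$. $V^c_\lambda=\{x\in K: q(x-\lambda)\le q(x-\mu)\ \forall\mu\in L\}$. $\chi_C$ is the characteristic function of $C$. If $G[C]$ has $k$ and $G[V\setminus C]$ has $r$ connected components, $\kappa(C,V\setminus C)=k+r-1$. *)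

theory Defs
  imports "HOL-Analysis.Analysis"
begin

(* A finite (multi)graph: vertex set V, edge set E (finite, since the edge type is finite),
   each edge e carries a fixed reference orientation from src e to tgt e.
   A real 1-cochain x is determined by its values x $ e on the reference orientations
   (x on the reversed edge is -x $ e); coordinates outside E are 0 for elements of K. *)

definition dcob :: "'e::finite set \<Rightarrow> ('e \<Rightarrow> 'v) \<Rightarrow> ('e \<Rightarrow> 'v) \<Rightarrow> ('v \<Rightarrow> real) \<Rightarrow> real^'e" where
  "dcob E src tgt f = (\<chi> e. if e \<in> E then f (tgt e) - f (src e) else 0)"

definition qf :: "'e::finite set \<Rightarrow> real^'e \<Rightarrow> real" where
  "qf E x = (\<Sum>e\<in>E. (x $ e)^2)"

definition Kspace :: "'e::finite set \<Rightarrow> ('e \<Rightarrow> 'v) \<Rightarrow> ('e \<Rightarrow> 'v) \<Rightarrow> (real^'e) set" where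
  "Kspace E src tgt = range (dcob E src tgt)"

definition Lat :: "'e::finite set \<Rightarrow> ('e \<Rightarrow> 'v) \<Rightarrow> ('e \<Rightarrow> 'v) \<Rightarrow> (real^'e) set" where
  "Lat E src tgt = {dcob E src tgt f | f. \<forall>v. f v \<in> \<int>}"

definition voronoi :: "'e::finite set \<Rightarrow> ('e \<Rightarrow> 'v) \<Rightarrow> ('e \<Rightarrow> 'v) \<Rightarrow> real^'e \<Rightarrow> (real^'e) set" where
  "voronoi E src tgt a =
     {x \<in> Kspace E src tgt. \<forall>m\<in>Lat E src tgt. qf E (x - a) \<le> qf E (x - m)}"

definition adjrel :: "'e set \<Rightarrow> ('e \<Rightarrow> 'v) \<Rightarrow> ('e \<Rightarrow> 'v) \<Rightarrow> 'v set \<Rightarrow> ('v \<times> 'v) set" where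
  "adjrel E src tgt S =
     {(src e, tgt e) | e. e \<in> E \<and> src e \<in> S \<and> tgt e \<in> S}
   \<union> {(tgt e, src e) | e. e \<in> E \<and> src e \<in> S \<and> tgt e \<in> S}"

definition ncomp :: "'e set \<Rightarrow> ('e \<Rightarrow> 'v) \<Rightarrow> ('e \<Rightarrow> 'v) \<Rightarrow> 'v set \<Rightarrow> nat" where
  "ncomp E src tgt S = card ((\<lambda>v. (adjrel E src tgt S)\<^sup>* `` {v}) ` S)"

definition graph_connected :: "'v set \<Rightarrow> 'e set \<Rightarrow> ('e \<Rightarrow> 'v) \<Rightarrow> ('e \<Rightarrow> 'v) \<Rightarrow> bool" where
  "graph_connected V E src tgt \<longleftrightarrow>
     V \<noteq> {} \<and> (\<forall>u\<in>V. \<forall>v\<in>V. (u, v) \<in> (adjrel E src tgt V)\<^sup>*)"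

definition kappa :: "'v set \<Rightarrow> 'e set \<Rightarrow> ('e \<Rightarrow> 'v) \<Rightarrow> ('e \<Rightarrow> 'v) \<Rightarrow> 'v set \<Rightarrow> int" where
  "kappa V E src tgt C = int (ncomp E src tgt C) + int (ncomp E src tgt (V - C)) - 1"

definition charf :: "'v set \<Rightarrow> 'v \<Rightarrow> real" where
  "charf C = (\<lambda>v. if v \<in> C then 1 else 0)"

definition bonds :: "'v set \<Rightarrow> 'e::finite set \<Rightarrow> ('e \<Rightarrow> 'v) \<Rightarrow> ('e \<Rightarrow> 'v) \<Rightarrow> (real^'e) set" where
  "bonds V E src tgt = {dcob E src tgt (charf C) | C. C \<subseteq> V \<and> kappa V E src tgt C = 1}"

definition subgroup_gen :: "'a::ab_group_add set \<Rightarrow> 'a set" where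
  "subgroup_gen S = \<Inter>{H. S \<subseteq> H \<and> 0 \<in> H \<and> (\<forall>a\<in>H. \<forall>b\<in>H. a - b \<in> H)}"

definition delaunay_adj :: "'e::finite set \<Rightarrow> ('e \<Rightarrow> 'v) \<Rightarrow> ('e \<Rightarrow> 'v) \<Rightarrow> real^'e \<Rightarrow> real^'e \<Rightarrow> bool" where
  "delaunay_adj E src tgt a b \<longleftrightarrow>
     (let F = voronoi E src tgt a \<inter> voronoi E src tgt b in
        F face_of voronoi E src tgt a \<and> F face_of voronoi E src tgt b \<and>
        aff_dim F = aff_dim (voronoi E src tgt a) - 1 \<and>
        aff_dim F = aff_dim (voronoi E src tgt b) - 1)"

definition cayley_adj :: "'a::ab_group_add set \<Rightarrow> 'a \<Rightarrow> 'a \<Rightarrow> bool" where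
  "cayley_adj S a b \<longleftrightarrow> (b - a \<in> S \<or> a - b \<in> S)"

end

theory Submission
  imports Defs
begin

lemma dcob_nth: "dcob E src tgt f $ e = (if e\<in>E then f (tgt e) - f (src e) else 0)"
  unfolding dcob_def by simp

lemma dcob_add: "dcob E src tgt (\<lambda>v. f v + g v) = dcob E src tgt f + dcob E src tgt g"
  by (simp add: vec_eq_iff dcob_nth)
lemma dcob_diff: "dcob E src tgt (\<lambda>v. f v - g v) = dcob E src tgt f - dcob E src tgt g"
  by (simp add: vec_eq_iff dcob_nth)
lemma dcob_uminus: "dcob E src tgt (\<lambda>v. - f v) = - dcob E src tgt f"
  by (simp add: vec_eq_iff dcob_nth)
lemma dcob_scale: "dcob E src tgt (\<lambda>v. c * f v) = c *\<^sub>R dcob E src tgt f"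
  by (simp add: vec_eq_iff dcob_nth algebra_simps)
lemma dcob_const: "dcob E src tgt (\<lambda>v. c) = 0"
  by (simp add: vec_eq_iff dcob_nth)

lemma dcob_inner: "dcob E src tgt f \<bullet> dcob E src tgt g =
   (\<Sum>e\<in>E. (f (tgt e) - f (src e)) * (g (tgt e) - g (src e)))"
proof -
  have "dcob E src tgt f \<bullet> dcob E src tgt g = (\<Sum>e\<in>UNIV. if e \<in> E then (f (tgt e) - f (src e)) * (g (tgt e) - g (src e)) else 0)"
    unfolding inner_vec_def by (rule sum.cong) (auto simp: dcob_nth)
  also have "\<dots> = (\<Sum>e\<in>E. (f (tgt e) - f (src e)) * (g (tgt e) - g (src e)))"
    by (simp add: sum.inter_restrict[symmetric])
  finally show ?thesis .
qed

lemma qf_dcob: "qf E (dcob E src tgt f) = dcob E src tgt f \<bullet> dcob E src tgt f"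
  unfolding dcob_inner qf_def by (rule sum.cong) (auto simp: dcob_nth power2_eq_square)

definition connS :: "'e set \<Rightarrow> ('e \<Rightarrow> 'v) \<Rightarrow> ('e \<Rightarrow> 'v) \<Rightarrow> 'v set \<Rightarrow> bool" where
  "connS E src tgt S \<longleftrightarrow> (\<forall>u\<in>S. \<forall>w\<in>S. (u,w) \<in> (adjrel E src tgt S)\<^sup>*)"

lemma adjrel_mem: "(x,y) \<in> adjrel E src tgt S \<Longrightarrow> x \<in> S \<and> y \<in> S"
  unfolding adjrel_def by auto

lemma rtrancl_adj_mem: "(u,w) \<in> (adjrel E src tgt S)\<^sup>* \<Longrightarrow> u \<in> S \<Longrightarrow> w \<in> S"
  by (induction rule: rtrancl_induct) (auto dest: adjrel_mem)

lemma path_const: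
  assumes "(u,w) \<in> (adjrel E src tgt S)\<^sup>*"
    and "\<forall>e\<in>E. src e \<in> S \<and> tgt e \<in> S \<longrightarrow> g (src e) = g (tgt e)"
  shows "g u = g w"
  using assms(1)
proof (induction rule: rtrancl_induct)
  case base then show ?case by simp
next
  case (step y z)
  from step.hyps(2) have "g y = g z" using assms(2) unfolding adjrel_def by auto
  then show ?case using step.IH by simp
qed

lemma ncomp_empty: "ncomp E src tgt {} = 0"
  unfolding ncomp_def by simp

lemma ncomp_pos: "finite S \<Longrightarrow> S \<noteq> {} \<Longrightarrow> ncomp E src tgt S \<noteq> 0"
  unfolding ncomp_def by auto

lemma conn_ncomp1:
  assumes "S \<noteq> {}" "connS E src tgt S"
  shows "ncomp E src tgt S = 1"
proof -
  have "\<And>u. u \<in> S \<Longrightarrow> (adjrel E src tgt S)\<^sup>* `` {u} = S"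
  proof
    fix u assume u: "u \<in> S"
    show "(adjrel E src tgt S)\<^sup>* `` {u} \<subseteq> S" using rtrancl_adj_mem[OF _ u] by blast
    show "S \<subseteq> (adjrel E src tgt S)\<^sup>* `` {u}" using assms(2) u unfolding connS_def by blast
  qed
  then have "(\<lambda>v. (adjrel E src tgt S)\<^sup>* `` {v}) ` S = {S}" 
  proof -
    have "(\<lambda>v. (adjrel E src tgt S)\<^sup>* `` {v}) ` S = (\<lambda>v. S) ` S" by (rule image_cong) (auto simp: \<open>\<And>u. u \<in> S \<Longrightarrow> _\<close>)
    then show ?thesis using assms(1) by (metis image_constant_conv)
  qed
  then show ?thesis unfolding ncomp_def by simp
qed

lemma ncomp1_conn:
  assumes "ncomp E src tgt S = 1"
  shows "connS E src tgt S"
  unfolding connS_def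
proof (intro ballI)
  fix u w assume u: "u \<in> S" and w: "w \<in> S"
  from assms obtain X where X: "(\<lambda>v. (adjrel E src tgt S)\<^sup>* `` {v}) ` S = {X}"
    using card_1_singletonE unfolding ncomp_def by metis
  have a: "(adjrel E src tgt S)\<^sup>* `` {u} = X" using X u by (metis image_eqI singletonD)
  have b: "(adjrel E src tgt S)\<^sup>* `` {w} = X" using X w by (metis image_eqI singletonD)
  from a b have "(adjrel E src tgt S)\<^sup>* `` {u} = (adjrel E src tgt S)\<^sup>* `` {w}" by simp
  moreover have "w \<in> (adjrel E src tgt S)\<^sup>* `` {w}" by simp
  ultimately show "(u, w) \<in> (adjrel E src tgt S)\<^sup>*" by blast
qed


lemma charf_int: "charf C v \<in> \<int>" unfolding charf_def by simp

lemma int_cases3: "(x::real) \<in> \<int> \<Longrightarrow> 0 \<le> x \<Longrightarrow> x = 0 \<or> x = 1 \<or> x \<ge> 2"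
proof -
  assume "x \<in> \<int>" "0 \<le> x"
  then obtain k where k: "x = of_int k" "0 \<le> k" by (auto elim: Ints_cases)
  then have "k = 0 \<or> k = 1 \<or> k \<ge> 2" by arith
  then show ?thesis using k by auto
qed

lemma minmax_nonneg: "(min (a::real) t - min b t) * (max a t - max b t) \<ge> 0"
  by (cases "a \<le> t"; cases "b \<le> t") (auto simp: min_def max_def mult_nonneg_nonneg mult_nonpos_nonpos)

lemma term_nonneg:
  assumes "(a::real) \<in> \<int>" "b = -1 \<or> b = 0 \<or> b = 1"
  shows "a * (a - b) \<ge> 0"
proof -
  obtain k where k: "a = of_int k" using assms(1) by (auto elim: Ints_cases)
  have "k \<ge> 1 \<or> k = 0 \<or> k \<le> -1" by arith
  then show ?thesis using assms(2) k
    by (auto intro: mult_nonneg_nonneg mult_nonpos_nonpos)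
qed

locale gr =
  fixes V :: "'v set" and E :: "'e::finite set" and src tgt :: "'e \<Rightarrow> 'v"
  assumes finV: "finite V" and ends: "\<forall>e\<in>E. src e \<in> V \<and> tgt e \<in> V"
    and conn: "graph_connected V E src tgt"
begin

abbreviation "d \<equiv> dcob E src tgt"
abbreviation "K \<equiv> Kspace E src tgt"
abbreviation "L \<equiv> Lat E src tgt"

lemma V_ne: "V \<noteq> {}" using conn unfolding graph_connected_def by simp

lemma connV: "connS E src tgt V" using conn unfolding graph_connected_def connS_def by simp

lemma ncompV: "ncomp E src tgt V = 1" using conn_ncomp1[OF V_ne connV] .

lemma dcob_cong: "(\<And>v. v \<in> V \<Longrightarrow> f v = g v) \<Longrightarrow> d f = d g"
proof -
  assume h: "\<And>v. v \<in> V \<Longrightarrow> f v = g v"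
  show ?thesis unfolding vec_eq_iff
  proof
    fix e show "d f $ e = d g $ e"
    proof (cases "e \<in> E")
      case True
      then have "src e \<in> V" "tgt e \<in> V" using ends by auto
      then show ?thesis using True h by (simp add: dcob_nth)
    qed (simp add: dcob_nth)
  qed
qed

lemma dcob_zero_const:
  assumes "d g = 0" "u \<in> V" "w \<in> V" shows "g u = g w"
proof -
  have "\<forall>e\<in>E. src e \<in> V \<and> tgt e \<in> V \<longrightarrow> g (src e) = g (tgt e)"
  proof (intro ballI impI)
    fix e assume "e \<in> E"
    then have "d g $ e = g (tgt e) - g (src e)" by (simp add: dcob_nth)
    moreover have "d g $ e = 0" using assms(1) by simp
    ultimately show "g (src e) = g (tgt e)" by linarith
  qed
  moreover have "(u,w) \<in> (adjrel E src tgt V)\<^sup>*" using connV assms(2,3) unfolding connS_def by blast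
  ultimately show ?thesis by (intro path_const[of u w E src tgt V g])
qed

lemma dcob_nonzero: "u \<in> V \<Longrightarrow> w \<in> V \<Longrightarrow> g u \<noteq> g w \<Longrightarrow> d g \<noteq> 0"
  using dcob_zero_const by auto

lemma K_d: "x \<in> K \<longleftrightarrow> (\<exists>f. x = d f)" unfolding Kspace_def by auto
lemma L_d: "x \<in> L \<longleftrightarrow> (\<exists>f. x = d f \<and> (\<forall>v. f v \<in> \<int>))" unfolding Lat_def by auto

lemma L_K: "x \<in> L \<Longrightarrow> x \<in> K" unfolding K_d L_d by auto

lemma K_diff: "x \<in> K \<Longrightarrow> y \<in> K \<Longrightarrow> x - y \<in> K"
proof -
  assume "x \<in> K" "y \<in> K"
  then obtain f g where "x = d f" "y = d g" unfolding K_d by auto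
  then have "x - y = d (\<lambda>v. f v - g v)" by (simp add: dcob_diff)
  then show ?thesis unfolding K_d by auto
qed
lemma K_add: "x \<in> K \<Longrightarrow> y \<in> K \<Longrightarrow> x + y \<in> K"
proof -
  assume "x \<in> K" "y \<in> K"
  then obtain f g where "x = d f" "y = d g" unfolding K_d by auto
  then have "x + y = d (\<lambda>v. f v + g v)" by (simp add: dcob_add)
  then show ?thesis unfolding K_d by auto
qed
lemma K_scale: "x \<in> K \<Longrightarrow> c *\<^sub>R x \<in> K"
proof -
  assume "x \<in> K"
  then obtain f where "x = d f" unfolding K_d by auto
  then have "c *\<^sub>R x = d (\<lambda>v. c * f v)" by (simp add: dcob_scale)
  then show ?thesis unfolding K_d by auto
qed
lemma K_zero: "0 \<in> K"
proof -
  have "(0::real^'e) = d (\<lambda>v. 0)" by (simp add: dcob_const)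
  then show ?thesis unfolding K_d by auto
qed

lemma subspace_K: "subspace K"
  unfolding subspace_def using K_zero K_add K_scale by auto

lemma L_diff: "x \<in> L \<Longrightarrow> y \<in> L \<Longrightarrow> x - y \<in> L"
proof -
  assume "x \<in> L" "y \<in> L"
  then obtain f g where "x = d f" "\<forall>v. f v \<in> \<int>" "y = d g" "\<forall>v. g v \<in> \<int>" unfolding L_d by auto
  then show ?thesis unfolding L_d by (intro exI[of _ "\<lambda>v. f v - g v"]) (auto simp: dcob_diff)
qed
lemma L_add: "x \<in> L \<Longrightarrow> y \<in> L \<Longrightarrow> x + y \<in> L"
proof -
  assume "x \<in> L" "y \<in> L"
  then obtain f g where "x = d f" "\<forall>v. f v \<in> \<int>" "y = d g" "\<forall>v. g v \<in> \<int>" unfolding L_d by auto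
  then show ?thesis unfolding L_d by (intro exI[of _ "\<lambda>v. f v + g v"]) (auto simp: dcob_add)
qed
lemma L_zero: "0 \<in> L" unfolding L_d by (intro exI[of _ "\<lambda>v. 0"]) (simp add: dcob_const)
lemma L_uminus: "x \<in> L \<Longrightarrow> - x \<in> L" using L_diff[OF L_zero] by simp
lemma L_charf: "d (charf C) \<in> L" unfolding L_d by (intro exI[of _ "charf C"]) (simp add: charf_int)

lemma L_inner_int: "x \<in> L \<Longrightarrow> y \<in> L \<Longrightarrow> x \<bullet> y \<in> \<int>"
proof -
  assume "x \<in> L" "y \<in> L"
  then obtain f g where "x = d f" "\<forall>v. f v \<in> \<int>" "y = d g" "\<forall>v. g v \<in> \<int>" unfolding L_d by auto
  then show ?thesis by (auto simp: dcob_inner)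
qed

lemma L_norm_ge1: "x \<in> L \<Longrightarrow> x \<noteq> 0 \<Longrightarrow> x \<bullet> x \<ge> 1"
proof -
  assume x: "x \<in> L" "x \<noteq> 0"
  obtain n where n: "x \<bullet> x = of_int n" using L_inner_int[OF x(1) x(1)] by (auto elim: Ints_cases)
  have "x \<bullet> x > 0" using x by simp
  then show ?thesis using n by simp
qed

lemma qf_K: "x \<in> K \<Longrightarrow> qf E x = x \<bullet> x"
proof -
  assume "x \<in> K" then obtain f where "x = d f" unfolding K_d by auto
  then show ?thesis by (simp add: qf_dcob)
qed


lemma bond_iff:
  assumes CV: "C \<subseteq> V"
  shows "kappa V E src tgt C = 1 \<longleftrightarrow>
    C \<noteq> {} \<and> C \<noteq> V \<and> connS E src tgt C \<and> connS E src tgt (V - C)"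
proof
  assume k: "kappa V E src tgt C = 1"
  then have s: "ncomp E src tgt C + ncomp E src tgt (V - C) = 2" unfolding kappa_def by linarith
  have fC: "finite C" "finite (V - C)" using finV CV finite_subset by auto
  have C1: "C \<noteq> {}"
  proof
    assume "C = {}" then show False using s ncompV by (simp add: ncomp_empty)
  qed
  have C2: "C \<noteq> V"
  proof
    assume "C = V" then show False using s ncompV by (simp add: ncomp_empty)
  qed
  have VC: "V - C \<noteq> {}" using C2 CV by auto
  have "ncomp E src tgt C \<noteq> 0" "ncomp E src tgt (V - C) \<noteq> 0"
    using ncomp_pos[of C E src tgt, OF fC(1) C1] ncomp_pos[of "V - C" E src tgt, OF fC(2) VC] by simp_all
  then have "ncomp E src tgt C = 1" "ncomp E src tgt (V - C) = 1" using s by linarith+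
  then show "C \<noteq> {} \<and> C \<noteq> V \<and> connS E src tgt C \<and> connS E src tgt (V - C)"
    using C1 C2 ncomp1_conn by auto
next
  assume h: "C \<noteq> {} \<and> C \<noteq> V \<and> connS E src tgt C \<and> connS E src tgt (V - C)"
  have VC: "V - C \<noteq> {}" using CV h by auto
  have "ncomp E src tgt C = 1" "ncomp E src tgt (V - C) = 1"
    using conn_ncomp1[of C E src tgt] conn_ncomp1[of "V - C" E src tgt] h VC by simp_all
  then show "kappa V E src tgt C = 1" unfolding kappa_def by simp
qed

definition bondsL where "bondsL = bonds V E src tgt"

lemma charf_compl: "C \<subseteq> V \<Longrightarrow> d (charf (V - C)) = - d (charf C)"
proof -
  assume CV: "C \<subseteq> V"
  have "d (charf (V - C)) = d (\<lambda>v. 1 - charf C v)"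
    by (rule dcob_cong) (auto simp: charf_def)
  also have "\<dots> = - d (charf C)" by (simp add: dcob_diff dcob_const)
  finally show ?thesis .
qed

lemma bonds_uminus: "x \<in> bonds V E src tgt \<Longrightarrow> - x \<in> bonds V E src tgt"
proof -
  assume "x \<in> bonds V E src tgt"
  then obtain C where C: "x = d (charf C)" "C \<subseteq> V" "kappa V E src tgt C = 1"
    unfolding bonds_def by auto
  have "V - (V - C) = C" using C(2) by auto
  then have "kappa V E src tgt (V - C) = 1" using C(3) unfolding kappa_def by simp
  moreover have "- x = d (charf (V - C))" using charf_compl[OF C(2)] C(1) by simp
  ultimately show ?thesis unfolding bonds_def by auto
qed

lemma bonds_L: "x \<in> bonds V E src tgt \<Longrightarrow> x \<in> L"
  unfolding bonds_def using L_charf by auto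

lemma charf_nonzero: "S \<subseteq> V \<Longrightarrow> S \<noteq> {} \<Longrightarrow> S \<noteq> V \<Longrightarrow> d (charf S) \<noteq> 0"
proof -
  assume a: "S \<subseteq> V" "S \<noteq> {}" "S \<noteq> V"
  obtain u where u: "u \<in> S" using a by auto
  obtain w where w: "w \<in> V" "w \<notin> S" using a by auto
  have "charf S u \<noteq> charf S w" using u w by (simp add: charf_def)
  then show ?thesis using dcob_nonzero[of u w] u w a(1) by auto
qed


lemma split_set:
  assumes SV: "S \<subseteq> V" "S \<noteq> V" and u: "u \<in> S" and w: "w \<in> S"
    and nc: "(u,w) \<notin> (adjrel E src tgt S)\<^sup>*"
  shows "\<exists>\<mu> \<nu>. \<mu> \<in> L \<and> \<nu> \<in> L \<and> \<mu> \<noteq> 0 \<and> \<nu> \<noteq> 0 \<and> d (charf S) = \<mu> + \<nu> \<and> \<mu> \<bullet> \<nu> = 0"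
proof -
  define R where "R = (adjrel E src tgt S)\<^sup>* `` {u}"
  have RS: "R \<subseteq> S" using rtrancl_adj_mem[OF _ u] unfolding R_def by auto
  have uR: "u \<in> R" unfolding R_def by simp
  have wR: "w \<notin> R" using nc unfolding R_def by simp
  define S2 where "S2 = S - R"
  have closed: "src e \<in> R \<longleftrightarrow> tgt e \<in> R" if e: "e \<in> E" "src e \<in> S" "tgt e \<in> S" for e
  proof -
    have a1: "(src e, tgt e) \<in> adjrel E src tgt S" "(tgt e, src e) \<in> adjrel E src tgt S"
      using e unfolding adjrel_def by auto
    show ?thesis
    proof
      assume "src e \<in> R"
      then have "(u, src e) \<in> (adjrel E src tgt S)\<^sup>*" unfolding R_def by simp
      then have "(u, tgt e) \<in> (adjrel E src tgt S)\<^sup>*" using a1(1) by (rule rtrancl_into_rtrancl)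
      then show "tgt e \<in> R" unfolding R_def by simp
    next
      assume "tgt e \<in> R"
      then have "(u, tgt e) \<in> (adjrel E src tgt S)\<^sup>*" unfolding R_def by simp
      then have "(u, src e) \<in> (adjrel E src tgt S)\<^sup>*" using a1(2) by (rule rtrancl_into_rtrancl)
      then show "src e \<in> R" unfolding R_def by simp
    qed
  qed
  have sumf: "charf S = (\<lambda>v. charf R v + charf S2 v)"
    using RS unfolding S2_def charf_def by (auto simp: fun_eq_iff)
  have eq: "d (charf S) = d (charf R) + d (charf S2)"
    unfolding sumf by (rule dcob_add)
  have n1: "d (charf R) \<noteq> 0"
    by (rule charf_nonzero) (use RS SV uR in auto)
  have n2: "d (charf S2) \<noteq> 0"
    by (rule charf_nonzero) (use RS SV w wR S2_def in auto)
  have inn: "d (charf R) \<bullet> d (charf S2) = 0"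
    unfolding dcob_inner
  proof (rule sum.neutral, rule ballI)
    fix e assume e: "e \<in> E"
    show "(charf R (tgt e) - charf R (src e)) * (charf S2 (tgt e) - charf S2 (src e)) = 0"
    proof (cases "src e \<in> S \<and> tgt e \<in> S")
      case True
      then have "src e \<in> R \<longleftrightarrow> tgt e \<in> R" using closed e by auto
      then show ?thesis unfolding charf_def by auto
    next
      case False
      then show ?thesis using RS unfolding charf_def S2_def by auto
    qed
  qed
  show ?thesis
    by (rule exI[of _ "d (charf R)"], rule exI[of _ "d (charf S2)"]) (use eq n1 n2 inn L_charf in auto)
qed

lemma split_charf:
  assumes CV: "C \<subseteq> V" and C1: "C \<noteq> {}" and C2: "C \<noteq> V" and k: "kappa V E src tgt C \<noteq> 1"
  shows "\<exists>\<mu> \<nu>. \<mu> \<in> L \<and> \<nu> \<in> L \<and> \<mu> \<noteq> 0 \<and> \<nu> \<noteq> 0 \<and> d (charf C) = \<mu> + \<nu> \<and> \<mu> \<bullet> \<nu> \<ge> 0"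
proof -
  have "\<not> connS E src tgt C \<or> \<not> connS E src tgt (V - C)" using bond_iff[OF CV] k C1 C2 by auto
  then show ?thesis
  proof
    assume "\<not> connS E src tgt C"
    then obtain u w where uw: "u \<in> C" "w \<in> C" "(u,w) \<notin> (adjrel E src tgt C)\<^sup>*"
      unfolding connS_def by auto
    from split_set[OF CV C2 uw] show ?thesis by auto
  next
    assume "\<not> connS E src tgt (V - C)"
    then obtain u w where uw: "u \<in> V - C" "w \<in> V - C" "(u,w) \<notin> (adjrel E src tgt (V - C))\<^sup>*"
      unfolding connS_def by auto
    have "V - C \<noteq> V" using C1 CV by auto
    from split_set[OF _ this uw] obtain \<mu> \<nu> where
      h: "\<mu> \<in> L" "\<nu> \<in> L" "\<mu> \<noteq> 0" "\<nu> \<noteq> 0" "d (charf (V - C)) = \<mu> + \<nu>" "\<mu> \<bullet> \<nu> = 0"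
      by auto
    have "d (charf C) = - (\<mu> + \<nu>)" using h(5) charf_compl[OF CV] by (metis minus_minus)
    then have "d (charf C) = (- \<mu>) + (- \<nu>)" by simp
    moreover have "(- \<mu>) \<bullet> (- \<nu>) = 0" using h(6) by simp
    ultimately show ?thesis using h L_uminus
      by (intro exI[of _ "- \<mu>"] exI[of _ "- \<nu>"]) auto
  qed
qed


lemma decomp:
  assumes lam: "lam \<in> L"
  shows "lam = 0 \<or> lam \<in> bonds V E src tgt \<or>
    (\<exists>\<mu> \<nu>. \<mu> \<in> L \<and> \<nu> \<in> L \<and> \<mu> \<noteq> 0 \<and> \<nu> \<noteq> 0 \<and> lam = \<mu> + \<nu> \<and> \<mu> \<bullet> \<nu> \<ge> 0)"
proof -
  obtain f where f: "lam = d f" "\<forall>v. f v \<in> \<int>" using lam unfolding L_d by auto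
  define m where "m = Min (f ` V)"
  define M where "M = Max (f ` V)"
  have fin: "finite (f ` V)" "f ` V \<noteq> {}" using finV V_ne by auto
  have mle: "m \<le> f v" "f v \<le> M" if "v \<in> V" for v
    using that fin unfolding m_def M_def by auto
  obtain v0 where v0: "v0 \<in> V" "f v0 = m" using Min_in[OF fin] unfolding m_def by auto
  obtain v1 where v1: "v1 \<in> V" "f v1 = M" using Max_in[OF fin] unfolding M_def by auto
  have mZ: "m \<in> \<int>" using f(2) v0 by metis
  have MZ: "M \<in> \<int>" using f(2) v1 by metis
  have "M - m = 0 \<or> M - m = 1 \<or> M - m \<ge> 2"
    using int_cases3[of "M - m"] mZ MZ mle[OF v0(1)] v1 by auto
  then consider (c0) "M = m" | (c1) "M = m + 1" | (c2) "M \<ge> m + 2" by linarith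
  then show ?thesis
  proof cases
    case c0
    have "d f = d (\<lambda>v. m)" by (rule dcob_cong) (use mle c0 in force)
    then show ?thesis using f(1) by (simp add: dcob_const)
  next
    case c1
    define C where "C = {v \<in> V. f v = M}"
    have fv: "f v = m + charf C v" if v: "v \<in> V" for v
    proof -
      have "f v - m \<in> \<int>" using f(2) mZ by auto
      then have "f v - m = 0 \<or> f v - m = 1 \<or> f v - m \<ge> 2" using int_cases3[of "f v - m"] mle[OF v] by auto
      then show ?thesis using mle[OF v] c1 v unfolding C_def charf_def by auto
    qed
    have "d f = d (\<lambda>v. m + charf C v)" by (rule dcob_cong) (use fv in auto)
    also have "\<dots> = d (charf C)" by (simp add: dcob_add dcob_const)
    finally have lc: "lam = d (charf C)" using f(1) by simp
    have CV: "C \<subseteq> V" unfolding C_def by auto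
    have C1: "C \<noteq> {}" using v1 unfolding C_def by auto
    have "v0 \<notin> C" using v0 c1 unfolding C_def by auto
    then have C2: "C \<noteq> V" using v0 by auto
    show ?thesis
    proof (cases "kappa V E src tgt C = 1")
      case True
      then have "lam \<in> bonds V E src tgt" unfolding bonds_def using lc CV by auto
      then show ?thesis by simp
    next
      case False
      from split_charf[OF CV C1 C2 False] show ?thesis using lc by auto
    qed
  next
    case c2
    define t where "t = m + 1"
    define \<mu> where "\<mu> = d (\<lambda>v. min (f v) t)"
    define \<nu> where "\<nu> = d (\<lambda>v. max (f v) t)"
    have tZ: "t \<in> \<int>" using mZ unfolding t_def by auto
    have "\<mu> \<in> L" unfolding \<mu>_def L_d
      by (intro exI[of _ "\<lambda>v. min (f v) t"]) (use f(2) tZ in \<open>auto simp: min_def\<close>)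
    moreover have "\<nu> \<in> L" unfolding \<nu>_def L_d
      by (intro exI[of _ "\<lambda>v. max (f v) t"]) (use f(2) tZ in \<open>auto simp: max_def\<close>)
    moreover have "\<mu> \<noteq> 0" unfolding \<mu>_def
      by (rule dcob_nonzero[OF v0(1) v1(1)]) (use v0 v1 c2 t_def in auto)
    moreover have "\<nu> \<noteq> 0" unfolding \<nu>_def
      by (rule dcob_nonzero[OF v0(1) v1(1)]) (use v0 v1 c2 t_def in auto)
    moreover have "lam = \<mu> + \<nu>"
    proof -
      have "\<mu> + \<nu> = d (\<lambda>v. min (f v) t + max (f v) t)" unfolding \<mu>_def \<nu>_def by (simp add: dcob_add)
      also have "(\<lambda>v. min (f v) t + max (f v) t) = (\<lambda>v. f v + t)" by (auto simp: fun_eq_iff min_def max_def)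
      also have "d (\<lambda>v. f v + t) = d f" by (simp add: dcob_add dcob_const)
      finally show ?thesis using f(1) by simp
    qed
    moreover have "\<mu> \<bullet> \<nu> \<ge> 0" unfolding \<mu>_def \<nu>_def dcob_inner
      by (rule sum_nonneg) (rule minmax_nonneg)
    ultimately show ?thesis by blast
  qed
qed


lemma floor_mono_L:
  assumes "y \<in> L" "z \<in> L" "y \<bullet> y < z \<bullet> z"
  shows "nat \<lfloor>y \<bullet> y\<rfloor> < nat \<lfloor>z \<bullet> z\<rfloor>"
proof -
  obtain a where a: "y \<bullet> y = of_int a" using L_inner_int[OF assms(1) assms(1)] by (auto elim: Ints_cases)
  obtain b where b: "z \<bullet> z = of_int b" using L_inner_int[OF assms(2) assms(2)] by (auto elim: Ints_cases)
  have "0 \<le> y \<bullet> y" by simp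
  then have "0 \<le> a" "a < b" using a b assms(3) by auto
  then show ?thesis using a b by simp
qed

lemma gen_L: "subgroup_gen (bonds V E src tgt) = L"
proof
  have "L \<in> {H. bonds V E src tgt \<subseteq> H \<and> 0 \<in> H \<and> (\<forall>a\<in>H. \<forall>b\<in>H. a - b \<in> H)}"
    using bonds_L L_zero L_diff by auto
  then show "subgroup_gen (bonds V E src tgt) \<subseteq> L" unfolding subgroup_gen_def by (rule Inter_lower)
next
  show "L \<subseteq> subgroup_gen (bonds V E src tgt)"
    unfolding subgroup_gen_def
  proof (rule Inter_greatest)
    fix H assume "H \<in> {H. bonds V E src tgt \<subseteq> H \<and> 0 \<in> H \<and> (\<forall>a\<in>H. \<forall>b\<in>H. a - b \<in> H)}"
    then have H: "bonds V E src tgt \<subseteq> H" "0 \<in> H" "\<And>a b. a \<in> H \<Longrightarrow> b \<in> H \<Longrightarrow> a - b \<in> H" by auto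
    have Hadd: "a + b \<in> H" if "a \<in> H" "b \<in> H" for a b
    proof -
      have "0 - b \<in> H" using H(3)[OF H(2) that(2)] .
      then have "a - (0 - b) \<in> H" using H(3)[OF that(1)] by blast
      then show ?thesis by simp
    qed
    have main: "\<forall>x. x \<in> L \<longrightarrow> nat \<lfloor>x \<bullet> x\<rfloor> = n \<longrightarrow> x \<in> H" for n
    proof (induction n rule: less_induct)
      case (less n)
      show ?case
      proof (intro allI impI)
        fix x assume x: "x \<in> L" "nat \<lfloor>x \<bullet> x\<rfloor> = n"
        from decomp[OF x(1)] consider (z) "x = 0" | (b) "x \<in> bonds V E src tgt"
          | (s) "\<exists>\<mu> \<nu>. \<mu> \<in> L \<and> \<nu> \<in> L \<and> \<mu> \<noteq> 0 \<and> \<nu> \<noteq> 0 \<and> x = \<mu> + \<nu> \<and> \<mu> \<bullet> \<nu> \<ge> 0" by blast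
        then show "x \<in> H"
        proof cases
          case z then show ?thesis using H by simp
        next
          case b then show ?thesis using H by auto
        next
          case s
          then obtain \<mu> \<nu> where mn: "\<mu> \<in> L" "\<nu> \<in> L" "\<mu> \<noteq> 0" "\<nu> \<noteq> 0" "x = \<mu> + \<nu>" "\<mu> \<bullet> \<nu> \<ge> 0" by blast
          have xx: "x \<bullet> x = \<mu> \<bullet> \<mu> + \<nu> \<bullet> \<nu> + 2 * (\<mu> \<bullet> \<nu>)"
            using mn(5) by (simp add: inner_add_left inner_add_right inner_commute)
          have "\<mu> \<bullet> \<mu> > 0" "\<nu> \<bullet> \<nu> > 0" using mn(3,4) by auto
          then have "\<mu> \<bullet> \<mu> < x \<bullet> x" "\<nu> \<bullet> \<nu> < x \<bullet> x" using xx mn(6) by linarith+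
          then have "nat \<lfloor>\<mu> \<bullet> \<mu>\<rfloor> < n" "nat \<lfloor>\<nu> \<bullet> \<nu>\<rfloor> < n"
            using floor_mono_L mn(1,2) x by auto
          then have "\<mu> \<in> H" "\<nu> \<in> H" using less mn(1,2) by auto
          then show ?thesis using Hadd mn(5) by simp
        qed
      qed
    qed
    show "L \<subseteq> H" using main by auto
  qed
qed


abbreviation "vor \<equiv> voronoi E src tgt"

lemma vor_inner: "a \<in> L \<Longrightarrow> vor a = {x \<in> K. \<forall>m\<in>L. (x - a) \<bullet> (x - a) \<le> (x - m) \<bullet> (x - m)}"
proof -
  assume a: "a \<in> L"
  have eq: "qf E (x - a) \<le> qf E (x - m) \<longleftrightarrow> (x - a) \<bullet> (x - a) \<le> (x - m) \<bullet> (x - m)"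
    if "x \<in> K" "m \<in> L" for x m
    using qf_K[OF K_diff[OF that(1) L_K[OF a]]] qf_K[OF K_diff[OF that(1) L_K[OF that(2)]]] by simp
  show ?thesis unfolding voronoi_def using eq by auto
qed

lemma vor0: "vor 0 = {x \<in> K. \<forall>m\<in>L. 2 * (x \<bullet> m) \<le> m \<bullet> m}"
proof -
  have "(x - 0) \<bullet> (x - 0) \<le> (x - m) \<bullet> (x - m) \<longleftrightarrow> 2 * (x \<bullet> m) \<le> m \<bullet> m" for x m :: "real^'e"
    by (simp add: inner_diff_left inner_diff_right inner_commute)
  then show ?thesis unfolding vor_inner[OF L_zero] by simp
qed

lemma vor_mem_transl: "a \<in> L \<Longrightarrow> x \<in> vor a \<longleftrightarrow> x - a \<in> vor 0"
proof -
  assume a: "a \<in> L"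
  have K: "x \<in> K \<longleftrightarrow> x - a \<in> K"
    using K_diff[of x a] K_add[of "x - a" a] L_K[OF a] by auto
  have Q: "(\<forall>m\<in>L. (x - a) \<bullet> (x - a) \<le> (x - m) \<bullet> (x - m)) \<longleftrightarrow>
           (\<forall>m\<in>L. (x - a - 0) \<bullet> (x - a - 0) \<le> (x - a - m) \<bullet> (x - a - m))"
  proof
    assume h: "\<forall>m\<in>L. (x - a) \<bullet> (x - a) \<le> (x - m) \<bullet> (x - m)"
    show "\<forall>m\<in>L. (x - a - 0) \<bullet> (x - a - 0) \<le> (x - a - m) \<bullet> (x - a - m)"
    proof
      fix m assume "m \<in> L"
      then have "m + a \<in> L" using L_add a by auto
      then have "(x - a) \<bullet> (x - a) \<le> (x - (m + a)) \<bullet> (x - (m + a))" using h by auto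
      then show "(x - a - 0) \<bullet> (x - a - 0) \<le> (x - a - m) \<bullet> (x - a - m)" by (simp add: algebra_simps)
    qed
  next
    assume h: "\<forall>m\<in>L. (x - a - 0) \<bullet> (x - a - 0) \<le> (x - a - m) \<bullet> (x - a - m)"
    show "\<forall>m\<in>L. (x - a) \<bullet> (x - a) \<le> (x - m) \<bullet> (x - m)"
    proof
      fix m assume "m \<in> L"
      then have "m - a \<in> L" using L_diff a by auto
      then have "(x - a - 0) \<bullet> (x - a - 0) \<le> (x - a - (m - a)) \<bullet> (x - a - (m - a))" using h by auto
      then show "(x - a) \<bullet> (x - a) \<le> (x - m) \<bullet> (x - m)" by (simp add: algebra_simps)
    qed
  qed
  show ?thesis unfolding vor_inner[OF a] vor_inner[OF L_zero] using K Q by auto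
qed

lemma transl_set: "(+) a ` S = {x. x - a \<in> S}" for a :: "real^'e"
proof
  show "(+) a ` S \<subseteq> {x. x - a \<in> S}" by auto
  show "{x. x - a \<in> S} \<subseteq> (+) a ` S"
  proof
    fix x assume "x \<in> {x. x - a \<in> S}"
    then have "x - a \<in> S" by simp
    moreover have "x = a + (x - a)" by simp
    ultimately show "x \<in> (+) a ` S" by (rule rev_image_eqI)
  qed
qed

lemma vor_transl: "a \<in> L \<Longrightarrow> vor a = (+) a ` vor 0"
  unfolding transl_set using vor_mem_transl by auto

lemma vor_transl2: "a \<in> L \<Longrightarrow> b \<in> L \<Longrightarrow> vor b = (+) a ` vor (b - a)"
proof -
  assume a: "a \<in> L" and b: "b \<in> L"
  have ba: "b - a \<in> L" using L_diff a b by auto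
  have "(+) a ` vor (b - a) = (+) a ` ((+) (b - a) ` vor 0)" using vor_transl[OF ba] by simp
  also have "\<dots> = ((+) a \<circ> (+) (b - a)) ` vor 0" by (simp add: image_comp)
  also have "(+) a \<circ> (+) (b - a) = (+) b" by (auto simp: fun_eq_iff algebra_simps)
  finally show ?thesis using vor_transl[OF b] by simp
qed

lemma vor_Int_transl: "a \<in> L \<Longrightarrow> b \<in> L \<Longrightarrow> vor a \<inter> vor b = (+) a ` (vor 0 \<inter> vor (b - a))"
proof -
  assume a: "a \<in> L" and b: "b \<in> L"
  have inj: "inj ((+) a)" by (simp add: inj_on_def)
  show ?thesis using image_Int[OF inj, of "vor 0" "vor (b - a)"] vor_transl[OF a] vor_transl2[OF a b] by simp
qed

lemma convex_vor0: "convex (vor 0)"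
proof -
  have "vor 0 = K \<inter> (\<Inter>m\<in>L. {x. m \<bullet> x \<le> (m \<bullet> m) / 2})"
  proof -
    have e: "2 * (x \<bullet> m) \<le> m \<bullet> m \<longleftrightarrow> m \<bullet> x \<le> (m \<bullet> m) / 2" for x m :: "real^'e"
      by (simp add: inner_commute mult.commute)
    show ?thesis unfolding vor0 using e by auto
  qed
  moreover have "convex (K \<inter> (\<Inter>m\<in>L. {x. m \<bullet> x \<le> (m \<bullet> m) / 2}))"
    by (intro convex_Int subspace_imp_convex subspace_K convex_INT convex_halfspace_le)
  ultimately show ?thesis by simp
qed

lemma aff_vor0: "aff_dim (vor 0) = aff_dim K"
proof -
  have sub1: "K \<inter> ball 0 (1/2) \<subseteq> vor 0"
  proof
    fix x assume x: "x \<in> K \<inter> ball 0 (1/2)"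
    have "2 * (x \<bullet> m) \<le> m \<bullet> m" if m: "m \<in> L" for m
    proof (cases "m = 0")
      case True then show ?thesis by simp
    next
      case False
      have m1: "m \<bullet> m \<ge> 1" using L_norm_ge1[OF m False] .
      have nm: "norm m ^ 2 = m \<bullet> m" by (rule power2_norm_eq_inner)
      have nm1: "norm m \<ge> 1"
      proof (rule ccontr)
        assume "\<not> 1 \<le> norm m"
        then have "norm m ^ 2 < 1" by (simp add: power_less_one_iff abs_less_iff)
        then show False using m1 nm by simp
      qed
      have "x \<bullet> m \<le> norm x * norm m" by (rule norm_cauchy_schwarz)
      also have "\<dots> \<le> (1/2) * norm m" using x by (intro mult_right_mono) auto
      finally have "2 * (x \<bullet> m) \<le> norm m" by simp
      also have "norm m \<le> norm m ^ 2" using mult_right_mono[OF nm1, of "norm m"] by (simp add: power2_eq_square)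
      finally show ?thesis using nm by simp
    qed
    then show "x \<in> vor 0" unfolding vor0 using x by auto
  qed
  have sub2: "vor 0 \<subseteq> K" unfolding vor0 by auto
  have "aff_dim (K \<inter> ball 0 (1/2)) = aff_dim K"
    by (rule aff_dim_convex_Int_open) (use subspace_imp_convex[OF subspace_K] K_zero in auto)
  then show ?thesis using aff_dim_subset[OF sub1] aff_dim_subset[OF sub2] by simp
qed

lemma aff_vor: "a \<in> L \<Longrightarrow> aff_dim (vor a) = aff_dim K"
  using vor_transl aff_dim_translation_eq aff_vor0 by metis

lemma F_eq: "l \<in> L \<Longrightarrow> vor 0 \<inter> vor l = vor 0 \<inter> {x. l \<bullet> x = (l \<bullet> l) / 2}"
proof -
  assume l: "l \<in> L"
  have vl: "vor l = {x \<in> K. \<forall>m\<in>L. (x - l) \<bullet> (x - l) \<le> (x - m) \<bullet> (x - m)}" using vor_inner[OF l] .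
  have ex: "(x - l) \<bullet> (x - l) = x \<bullet> x - 2 * (l \<bullet> x) + l \<bullet> l" for x
    by (simp add: inner_diff_left inner_diff_right inner_commute)
  have ex2: "(x - m) \<bullet> (x - m) = x \<bullet> x - 2 * (x \<bullet> m) + m \<bullet> m" for x m :: "real^'e"
    by (simp add: inner_diff_left inner_diff_right inner_commute)
  show ?thesis
  proof (intro set_eqI iffI)
    fix x assume x: "x \<in> vor 0 \<inter> vor l"
    then have "2 * (x \<bullet> l) \<le> l \<bullet> l" using l unfolding vor0 by auto
    moreover have "(x - l) \<bullet> (x - l) \<le> (x - 0) \<bullet> (x - 0)" using x L_zero unfolding vl by blast
    ultimately show "x \<in> vor 0 \<inter> {x. l \<bullet> x = (l \<bullet> l) / 2}" using x ex[of x] by (auto simp: inner_commute)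
  next
    fix x assume x: "x \<in> vor 0 \<inter> {x. l \<bullet> x = (l \<bullet> l) / 2}"
    then have xK: "x \<in> K" and h: "\<forall>m\<in>L. 2 * (x \<bullet> m) \<le> m \<bullet> m" and e: "l \<bullet> x = (l \<bullet> l) / 2"
      unfolding vor0 by auto
    have "(x - l) \<bullet> (x - l) \<le> (x - m) \<bullet> (x - m)" if "m \<in> L" for m
      using h that ex[of x] ex2[of x m] e by auto
    then show "x \<in> vor 0 \<inter> vor l" using x xK unfolding vl by auto
  qed
qed

lemma face0: "l \<in> L \<Longrightarrow> vor 0 \<inter> vor l face_of vor 0"
proof -
  assume l: "l \<in> L"
  have "\<And>x. x \<in> vor 0 \<Longrightarrow> l \<bullet> x \<le> (l \<bullet> l) / 2" using l unfolding vor0 by (auto simp: inner_commute)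
  then show ?thesis unfolding F_eq[OF l] by (rule face_of_Int_supporting_hyperplane_le[OF convex_vor0])
qed

lemma face_ab: "a \<in> L \<Longrightarrow> b \<in> L \<Longrightarrow> vor a \<inter> vor b face_of vor a"
proof -
  assume a: "a \<in> L" and b: "b \<in> L"
  have "vor 0 \<inter> vor (b - a) face_of vor 0" using face0 L_diff[OF b a] by simp
  then have "(+) a ` (vor 0 \<inter> vor (b - a)) face_of (+) a ` vor 0" by simp
  then show ?thesis using vor_Int_transl[OF a b] vor_transl[OF a] by simp
qed

lemma delaunay_red: "a \<in> L \<Longrightarrow> b \<in> L \<Longrightarrow>
   delaunay_adj E src tgt a b \<longleftrightarrow> aff_dim (vor 0 \<inter> vor (b - a)) = aff_dim K - 1"
proof -
  assume a: "a \<in> L" and b: "b \<in> L"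
  have "aff_dim (vor a \<inter> vor b) = aff_dim (vor 0 \<inter> vor (b - a))"
    using vor_Int_transl[OF a b] aff_dim_translation_eq by metis
  moreover have "vor a \<inter> vor b face_of vor a" using face_ab[OF a b] .
  moreover have "vor a \<inter> vor b face_of vor b" using face_ab[OF b a] by (simp add: Int_commute)
  ultimately show ?thesis unfolding delaunay_adj_def Let_def using aff_vor[OF a] aff_vor[OF b] by simp
qed


lemma bond_data:
  assumes "l \<in> bonds V E src tgt"
  obtains C where "l = d (charf C)" "C \<subseteq> V" "C \<noteq> {}" "C \<noteq> V"
    "connS E src tgt C" "connS E src tgt (V - C)"
proof -
  obtain C where C: "l = d (charf C)" "C \<subseteq> V" "kappa V E src tgt C = 1"
    using assms unfolding bonds_def by auto
  then show ?thesis using that bond_iff[OF C(2)] by auto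
qed

lemma bond_nonzero: "l \<in> bonds V E src tgt \<Longrightarrow> l \<noteq> 0"
  by (erule bond_data) (use charf_nonzero in auto)

lemma conn_const:
  assumes "connS E src tgt S" "\<forall>e\<in>E. src e \<in> S \<and> tgt e \<in> S \<longrightarrow> g (src e) = g (tgt e)"
    "u \<in> S" "w \<in> S"
  shows "g u = g w"
proof -
  have "(u, w) \<in> (adjrel E src tgt S)\<^sup>*" using assms(1,3,4) unfolding connS_def by blast
  then show ?thesis using assms(2) by (rule path_const)
qed

lemma crossing_edge:
  assumes "C \<subseteq> V" "c \<in> C" "z \<in> V" "z \<notin> C"
  shows "\<exists>e\<in>E. charf C (src e) \<noteq> charf C (tgt e)"
proof (rule ccontr)
  assume "\<not> ?thesis"
  then have h: "\<forall>e\<in>E. src e \<in> V \<and> tgt e \<in> V \<longrightarrow> charf C (src e) = charf C (tgt e)" by auto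
  have "charf C c = charf C z" using conn_const[OF connV h, of c z] assms by auto
  then show False using assms unfolding charf_def by auto
qed

lemma bond_gap:
  assumes lb: "l \<in> bonds V E src tgt" and m: "m \<in> L" and m0: "m \<noteq> 0" and ml: "m \<noteq> l"
  shows "m \<bullet> m - m \<bullet> l \<ge> 1"
proof -
  obtain C where C: "l = d (charf C)" "C \<subseteq> V" "C \<noteq> {}" "C \<noteq> V"
    "connS E src tgt C" "connS E src tgt (V - C)" using lb by (rule bond_data)
  obtain g where g: "m = d g" "\<forall>v. g v \<in> \<int>" using m unfolding L_d by auto
  define a where "a e = g (tgt e) - g (src e)" for e
  define b where "b e = charf C (tgt e) - charf C (src e)" for e
  define T where "T e = a e * (a e - b e)" for e
  have mm: "m \<bullet> m = (\<Sum>e\<in>E. a e * a e)" unfolding g(1) dcob_inner a_def ..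
  have mlq: "m \<bullet> l = (\<Sum>e\<in>E. a e * b e)" unfolding g(1) C(1) dcob_inner a_def b_def ..
  have sumT: "m \<bullet> m - m \<bullet> l = (\<Sum>e\<in>E. T e)"
    unfolding mm mlq T_def by (simp add: sum_subtractf right_diff_distrib)
  have bvals: "b e = -1 \<or> b e = 0 \<or> b e = 1" for e unfolding b_def charf_def by auto
  have aZ: "a e \<in> \<int>" for e unfolding a_def using g(2) by auto
  have Tnn: "T e \<ge> 0" for e unfolding T_def by (rule term_nonneg[OF aZ bvals])
  have TZ: "T e \<in> \<int>" for e unfolding T_def using aZ[of e] bvals[of e] by auto
  show ?thesis
  proof (rule ccontr)
    assume "\<not> ?thesis"
    then have lt: "(\<Sum>e\<in>E. T e) < 1" using sumT by simp
    have T0: "T e = 0" if e: "e \<in> E" for e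
    proof -
      have "T e \<le> (\<Sum>e\<in>E. T e)" by (rule member_le_sum) (use e Tnn in auto)
      then have "T e < 1" using lt by simp
      moreover obtain k where "T e = of_int k" using TZ[of e] by (auto elim: Ints_cases)
      ultimately show ?thesis using Tnn[of e] by auto
    qed
    have ab: "a e = 0 \<or> a e = b e" if "e \<in> E" for e
      using T0[OF that] unfolding T_def by auto
    have inside: "g (src e) = g (tgt e)" if e: "e \<in> E" "charf C (src e) = charf C (tgt e)" for e
    proof -
      have "b e = 0" using e(2) unfolding b_def by simp
      then have "a e = 0" using ab[OF e(1)] by auto
      then show ?thesis unfolding a_def by simp
    qed
    have constC: "g u = g w" if "u \<in> C" "w \<in> C" for u w
    proof (rule conn_const[OF C(5) _ that])
      show "\<forall>e\<in>E. src e \<in> C \<and> tgt e \<in> C \<longrightarrow> g (src e) = g (tgt e)"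
        using inside unfolding charf_def by auto
    qed
    have constD: "g u = g w" if "u \<in> V - C" "w \<in> V - C" for u w
    proof (rule conn_const[OF C(6) _ that])
      show "\<forall>e\<in>E. src e \<in> V - C \<and> tgt e \<in> V - C \<longrightarrow> g (src e) = g (tgt e)"
        using inside unfolding charf_def by auto
    qed
    obtain c where c: "c \<in> C" using C(3) by auto
    obtain z where z: "z \<in> V" "z \<notin> C" using C(2,4) by auto
    obtain e where e: "e \<in> E" "charf C (src e) \<noteq> charf C (tgt e)"
      using crossing_edge[OF C(2) c z] by auto
    have es: "src e \<in> V" "tgt e \<in> V" using ends e(1) by auto
    have "g c = g z \<or> g c = g z + 1"
    proof (cases "src e \<in> C")
      case True
      then have t: "tgt e \<notin> C" using e(2) unfolding charf_def by (auto split: if_splits)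
      have "g (src e) = g c" using constC[OF True c] .
      moreover have "g (tgt e) = g z" using constD[of "tgt e" z] t es z by auto
      moreover have "b e = -1" unfolding b_def charf_def using True t by simp
      ultimately show ?thesis using ab[OF e(1)] unfolding a_def by auto
    next
      case False
      then have t: "tgt e \<in> C" using e(2) unfolding charf_def by (auto split: if_splits)
      have "g (tgt e) = g c" using constC[OF t c] .
      moreover have "g (src e) = g z" using constD[of "src e" z] False es z by auto
      moreover have "b e = 1" unfolding b_def charf_def using False t by simp
      ultimately show ?thesis using ab[OF e(1)] unfolding a_def by auto
    qed
    then show False
    proof
      assume h: "g c = g z"
      have "d g = d (\<lambda>v. g z)"
      proof (rule dcob_cong)
        fix v assume v: "v \<in> V"
        show "g v = g z"
        proof (cases "v \<in> C")
          case True then show ?thesis using constC[OF True c] h by simp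
        next
          case False then show ?thesis using constD[of v z] v z by auto
        qed
      qed
      then show False using m0 g(1) by (simp add: dcob_const)
    next
      assume h: "g c = g z + 1"
      have "d g = d (\<lambda>v. g z + charf C v)"
      proof (rule dcob_cong)
        fix v assume v: "v \<in> V"
        show "g v = g z + charf C v"
        proof (cases "v \<in> C")
          case True then show ?thesis using constC[OF True c] h by (simp add: charf_def)
        next
          case False then show ?thesis using constD[of v z] v z by (auto simp: charf_def)
        qed
      qed
      also have "\<dots> = l" using C(1) by (simp add: dcob_add dcob_const)
      finally show False using ml g(1) by simp
    qed
  qed
qed


lemma bond_ball:
  assumes lb: "l \<in> bonds V E src tgt" and x: "x \<in> K" and hx: "l \<bullet> x = (l \<bullet> l) / 2"
    and nx: "norm (x - (1/2) *\<^sub>R l) < 1 / (2 * (norm l + 1))" and m: "m \<in> L"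
  shows "2 * (x \<bullet> m) \<le> m \<bullet> m"
proof -
  define y where "y = x - (1/2) *\<^sub>R l"
  define r where "r = 1 / (2 * (norm l + 1))"
  define s where "s = norm m"
  define N where "N = norm l"
  have xm: "x \<bullet> m = y \<bullet> m + (l \<bullet> m) / 2"
    unfolding y_def by (simp add: inner_diff_left)
  show ?thesis
  proof (cases "m = 0 \<or> m = l")
    case True
    then show ?thesis using hx by (auto simp: inner_commute)
  next
    case False
    then have A: "m \<bullet> m - m \<bullet> l \<ge> 1" using bond_gap[OF lb m] by auto
    have N0: "N \<ge> 0" "s \<ge> 0" unfolding N_def s_def by auto
    have pos: "2 * (N + 1) > 0" using N0 by simp
    have r0: "r > 0" "r * (2 * (N + 1)) = 1" unfolding r_def N_def[symmetric] using pos by auto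
    have ny: "norm y < r" using nx unfolding y_def r_def .
    have "y \<bullet> m \<le> norm y * s" unfolding s_def by (rule norm_cauchy_schwarz)
    also have "\<dots> \<le> r * s" using ny N0 by (intro mult_right_mono) auto
    finally have ym: "y \<bullet> m \<le> r * s" .
    have lm: "l \<bullet> m \<le> N * s" unfolding N_def s_def by (rule norm_cauchy_schwarz)
    have mm: "m \<bullet> m = s * s" unfolding s_def using power2_norm_eq_inner[of m] by (simp add: power2_eq_square)
    have ml: "m \<bullet> l = l \<bullet> m" by (simp add: inner_commute)
    have "2 * (y \<bullet> m) \<le> m \<bullet> m - m \<bullet> l"
    proof (cases "s \<le> N + 1")
      case True
      have "2 * r * s \<le> 2 * r * (N + 1)" using True r0 by (intro mult_left_mono) auto
      also have "\<dots> = 1" using r0 by (simp add: algebra_simps)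
      finally show ?thesis using ym A by linarith
    next
      case False
      have "2 * r * 1 \<le> 2 * r * (N + 1)" using r0 N0 by (intro mult_left_mono) auto
      then have r2: "2 * r \<le> 1" using r0 by (simp add: algebra_simps)
      have "2 * r * s \<le> 1 * s" using r2 N0 by (intro mult_right_mono) auto
      also have "\<dots> \<le> s * (s - N)" using mult_left_mono[of 1 "s - N" s] False N0 by (simp add: mult.commute)
      also have "\<dots> = m \<bullet> m - N * s" using mm by (simp add: algebra_simps)
      also have "\<dots> \<le> m \<bullet> m - m \<bullet> l" using lm ml by simp
      finally show ?thesis using ym by linarith
    qed
    then show ?thesis using xm ml by linarith
  qed
qed


lemma hyper_dim:
  assumes l: "l \<in> L" "l \<noteq> 0"
  shows "aff_dim (K \<inter> {x. l \<bullet> x = (l \<bullet> l) / 2}) = aff_dim K - 1"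
proof -
  have c: "(1/2) *\<^sub>R l \<in> K \<inter> {x. l \<bullet> x = (l \<bullet> l) / 2}" using K_scale[OF L_K[OF l(1)]] by auto
  have "0 \<in> K" "0 \<notin> {x. l \<bullet> x = (l \<bullet> l) / 2}" using K_zero l(2) by auto
  then have nsub: "\<not> K \<subseteq> {x. l \<bullet> x = (l \<bullet> l) / 2}" by blast
  show ?thesis
    using aff_dim_affine_Int_hyperplane[OF subspace_imp_affine[OF subspace_K], of l "(l \<bullet> l) / 2"] c nsub
    by auto
qed

lemma key:
  assumes l: "l \<in> L"
  shows "aff_dim (vor 0 \<inter> vor l) = aff_dim K - 1 \<longleftrightarrow> l \<in> bonds V E src tgt"
proof
  assume lb: "l \<in> bonds V E src tgt"
  define HP where "HP = {x. l \<bullet> x = (l \<bullet> l) / 2}"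
  define c where "c = (1/2) *\<^sub>R l"
  define r where "r = 1 / (2 * (norm l + 1))"
  have l0: "l \<noteq> 0" using bond_nonzero[OF lb] .
  have r0: "r > 0" unfolding r_def by (simp add: add_nonneg_pos)
  have cK: "c \<in> K \<inter> HP" unfolding c_def HP_def using K_scale[OF L_K[OF l]] by auto
  have sub1: "(K \<inter> HP) \<inter> ball c r \<subseteq> vor 0 \<inter> vor l"
  proof
    fix x assume x: "x \<in> (K \<inter> HP) \<inter> ball c r"
    have nx: "norm (x - (1/2) *\<^sub>R l) < 1 / (2 * (norm l + 1))"
      using x unfolding c_def r_def by (simp add: dist_norm norm_minus_commute)
    have hx: "l \<bullet> x = (l \<bullet> l) / 2" using x unfolding HP_def by simp
    have "x \<in> vor 0" unfolding vor0 using x bond_ball[OF lb _ hx nx] by auto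
    then show "x \<in> vor 0 \<inter> vor l" unfolding F_eq[OF l] using hx by simp
  qed
  have s0: "vor 0 \<subseteq> K" unfolding vor0 by auto
  have sub2: "vor 0 \<inter> vor l \<subseteq> K \<inter> HP" using F_eq[OF l] s0 unfolding HP_def by auto
  have "aff_dim ((K \<inter> HP) \<inter> ball c r) = aff_dim (K \<inter> HP)"
  proof (rule aff_dim_convex_Int_open)
    show "convex (K \<inter> HP)" unfolding HP_def
      by (intro convex_Int subspace_imp_convex subspace_K convex_hyperplane)
    show "open (ball c r)" by simp
    show "K \<inter> HP \<inter> ball c r \<noteq> {}" using cK r0 by auto
  qed
  then show "aff_dim (vor 0 \<inter> vor l) = aff_dim K - 1"
    using aff_dim_subset[OF sub1] aff_dim_subset[OF sub2] hyper_dim[OF l l0] unfolding HP_def by simp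
next
  assume ad: "aff_dim (vor 0 \<inter> vor l) = aff_dim K - 1"
  show "l \<in> bonds V E src tgt"
  proof (rule ccontr)
    assume nb: "l \<notin> bonds V E src tgt"
    from decomp[OF l] nb consider (z) "l = 0"
      | (s) "\<exists>\<mu> \<nu>. \<mu> \<in> L \<and> \<nu> \<in> L \<and> \<mu> \<noteq> 0 \<and> \<nu> \<noteq> 0 \<and> l = \<mu> + \<nu> \<and> \<mu> \<bullet> \<nu> \<ge> 0" by blast
    then show False
    proof cases
      case z
      then show False using ad aff_vor0 by simp
    next
      case s
      then obtain \<mu> \<nu> where mn: "\<mu> \<in> L" "\<nu> \<in> L" "\<mu> \<noteq> 0" "\<nu> \<noteq> 0" "l = \<mu> + \<nu>" "\<mu> \<bullet> \<nu> \<ge> 0" by blast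
      define HP where "HP = {x. l \<bullet> x = (l \<bullet> l) / 2}"
      define HM where "HM = {x. \<mu> \<bullet> x = (\<mu> \<bullet> \<mu>) / 2}"
      define F where "F = vor 0 \<inter> vor l"
      have ll: "l \<bullet> l = \<mu> \<bullet> \<mu> + \<nu> \<bullet> \<nu> + 2 * (\<mu> \<bullet> \<nu>)"
        using mn(5) by (simp add: inner_add_left inner_add_right inner_commute)
      have mpos: "\<mu> \<bullet> \<mu> > 0" "\<nu> \<bullet> \<nu> > 0" using mn(3,4) by auto
      have llt: "\<mu> \<bullet> \<mu> < l \<bullet> l" using ll mpos mn(6) by linarith
      have l0: "l \<noteq> 0"
      proof
        assume "l = 0" then have "l \<bullet> l = 0" by simp
        then show False using llt mpos(1) by linarith
      qed
      have FA: "F \<subseteq> K \<inter> HP \<inter> HM"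
      proof
        fix x assume "x \<in> F"
        then have "x \<in> vor 0 \<inter> {x. l \<bullet> x = (l \<bullet> l) / 2}" using F_eq[OF l] unfolding F_def by simp
        then have x: "x \<in> K" "2 * (x \<bullet> \<mu>) \<le> \<mu> \<bullet> \<mu>" "2 * (x \<bullet> \<nu>) \<le> \<nu> \<bullet> \<nu>" "l \<bullet> x = (l \<bullet> l) / 2"
          unfolding vor0 using mn(1,2) by auto
        have "l \<bullet> x = \<mu> \<bullet> x + \<nu> \<bullet> x" using mn(5) by (simp add: inner_add_left)
        also have "\<dots> = x \<bullet> \<mu> + x \<bullet> \<nu>" by (simp add: inner_commute)
        finally have "l \<bullet> x = x \<bullet> \<mu> + x \<bullet> \<nu>" .
        then have "2 * (x \<bullet> \<mu>) = \<mu> \<bullet> \<mu>" using x ll mn(6) by linarith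
        then show "x \<in> K \<inter> HP \<inter> HM" using x unfolding HP_def HM_def by (auto simp: inner_commute)
      qed
      have affA: "affine (K \<inter> HP \<inter> HM)" unfolding HP_def HM_def
        by (intro affine_Int subspace_imp_affine subspace_K affine_hyperplane)
      have affB: "affine (K \<inter> HP)" unfolding HP_def
        by (intro affine_Int subspace_imp_affine subspace_K affine_hyperplane)
      have hullA: "affine hull F \<subseteq> K \<inter> HP \<inter> HM" by (rule hull_minimal[of F "K \<inter> HP \<inter> HM" affine, OF FA affA])
      define c where "c = (1/2) *\<^sub>R l"
      define w where "w = (l \<bullet> l) *\<^sub>R \<mu> - (\<mu> \<bullet> l) *\<^sub>R l"
      have lK: "l \<in> K" "\<mu> \<in> K" using L_K l mn(1) by auto
      have cB: "c \<in> K \<inter> HP" unfolding c_def HP_def using K_scale[OF lK(1)] by auto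
      have wK: "w \<in> K" unfolding w_def using K_diff K_scale lK by auto
      have lw: "l \<bullet> w = 0" unfolding w_def by (simp add: inner_diff_right inner_commute)
      have pB: "c + w \<in> K \<inter> HP" using cB wK lw K_add unfolding HP_def by (auto simp: inner_add_right)
      have notboth: "c \<notin> HM \<or> c + w \<notin> HM"
      proof (rule ccontr)
        assume "\<not> ?thesis"
        then have h1: "\<mu> \<bullet> c = (\<mu> \<bullet> \<mu>) / 2" and h2: "\<mu> \<bullet> (c + w) = (\<mu> \<bullet> \<mu>) / 2" unfolding HM_def by auto
        have e1: "\<mu> \<bullet> l = \<mu> \<bullet> \<mu>" using h1 unfolding c_def by simp
        have "\<mu> \<bullet> w = 0" using h1 h2 by (simp add: inner_add_right)
        then have "(l \<bullet> l) * (\<mu> \<bullet> \<mu>) = (\<mu> \<bullet> \<mu>) * (\<mu> \<bullet> \<mu>)"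
          unfolding w_def using e1 by (simp add: inner_diff_right)
        then have "l \<bullet> l = \<mu> \<bullet> \<mu>" using mpos by simp
        then show False using llt by simp
      qed
      have psub: "affine hull F \<subset> affine hull (K \<inter> HP)"
      proof -
        have ps: "K \<inter> HP \<inter> HM \<subset> K \<inter> HP" using notboth cB pB by auto
        have e: "affine hull (K \<inter> HP) = K \<inter> HP" by (rule hull_same[of affine, OF affB])
        show ?thesis unfolding e by (rule subset_psubset_trans[OF hullA ps])
      qed
      have "aff_dim F < aff_dim (K \<inter> HP)" by (rule aff_dim_psubset[OF psub])
      then show False using ad hyper_dim[OF l l0] unfolding F_def HP_def by simp
    qed
  qed
qed

end

theorem mainTheorem16:
  fixes V :: "'v set" and E :: "'e::finite set" and src tgt :: "'e \<Rightarrow> 'v"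
  assumes "finite V"
    and "\<forall>e\<in>E. src e \<in> V \<and> tgt e \<in> V"
    and "graph_connected V E src tgt"
  shows "subgroup_gen (bonds V E src tgt) = Lat E src tgt \<and>
    (\<exists>\<phi>. bij_betw \<phi> (Lat E src tgt) (Lat E src tgt) \<and>
       (\<forall>a\<in>Lat E src tgt. \<forall>b\<in>Lat E src tgt.
          delaunay_adj E src tgt a b \<longleftrightarrow> cayley_adj (bonds V E src tgt) (\<phi> a) (\<phi> b)))"
proof -
  interpret gr V E src tgt using assms by unfold_locales
  have adj: "delaunay_adj E src tgt a b \<longleftrightarrow> cayley_adj (bonds V E src tgt) (id a) (id b)"
    if a: "a \<in> L" and b: "b \<in> L" for a b
  proof -
    have ba: "b - a \<in> L" using L_diff[OF b a] .
    have "delaunay_adj E src tgt a b \<longleftrightarrow> b - a \<in> bonds V E src tgt"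
      using delaunay_red[OF a b] key[OF ba] by simp
    also have "\<dots> \<longleftrightarrow> cayley_adj (bonds V E src tgt) a b"
      unfolding cayley_adj_def using bonds_uminus[of "b - a"] bonds_uminus[of "a - b"] by auto
    finally show ?thesis by simp
  qed
  have "bij_betw id L L" by (rule bij_betw_id)
  then have "\<exists>\<phi>. bij_betw \<phi> L L \<and> (\<forall>a\<in>L. \<forall>b\<in>L.
          delaunay_adj E src tgt a b \<longleftrightarrow> cayley_adj (bonds V E src tgt) (\<phi> a) (\<phi> b))"
    using adj by (intro exI[of _ id]) simp
  then show ?thesis using gen_L by simp
qed

end
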